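(* Assume $c_X>0$ and $\mathbf b_X-4\rho\in\Xi$, where $\mathbf b_X=\frac1V\int_{2P_+}y[1-\theta_X(y)]\pi(y)\,dy$. Then there exists $\lambda>0$ such that $$\mathcal L_X(u)\ge\lambda\int_{2P_+}u(y)\,\pi(y)\,[1-\theta_X(y)]\,dy\qquad\text{for all }u\in\hat{\mathcal C}_W.$$
   Context: $G$ is a connected complex reductive group of complex dimension $n$, $K$ a maximal compact subgroup with $G=K^{\mathbb C}$, $T\subset K$ a maximal torus, $T^{\mathbb C}$ its complexification, $J$ the complex structure, $\mathfrak a=J\mathfrak t$. $\Phi$ is the root system of $(G,T^{\mathbb C})$, $\Phi_+$ a choice of positive roots, $W$ the Weyl group, $\rho=\frac12\sum_{\alpha\in\Phi_+}\alpha$. $\mathfrak a=\mathfrak a_t\oplus\mathfrak a_{ss}$ with $\mathfrak a_t=\mathfrak z(\mathfrak g)\cap\mathfrak a$, $\mathfrak a_{ss}=\mathfrak a\cap[\mathfrak g,\mathfrak g]$; $\langle\cdot,\cdot\rangle$ is a scalar product on $\mathfrak a$ extending the Killing form on $\mathfrak a_{ss}$ with $\mathfrak a_t\perp\mathfrak a_{ss}$; roots are viewed in $\mathfrak a^*\cong\mathfrak a$. $\mathfrak a^*_+=\{y:\langle\alpha,y\rangle>0\ \forall\alpha\in\Phi_+\}$; $\Xi$ is the relative interior of the cone generated by $\Phi_+$. $dy$ is Lebesgue measure on $\mathfrak a^*$ normalized by the character lattice of $T^{\mathbb C}$; $\pi(y)=\prod_{\alpha\in\Phi_+}\langle\alpha,y\rangle^2$.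 $M$ is a Fano compactification of $G$ (compact Fano manifold with holomorphic $G\times G$-action having an open dense orbit isomorphic to $G$ as a $G\times G$-homogeneous space, $-K_M$ $G\times G$-linearized), $P\subset\mathfrak a^*$ the $W$-invariant moment polytope of $(Z,-K_M|_Z)$, $Z=\overline{T^{\mathbb C}}$, w.r.t. a $K\times K$-invariant Kähler form in $2\pi c_1(M)$; $P_+=P\cap\overline{\mathfrak a^*_+}$; $V=\int_{2P_+}\pi dy$; $O$ is the origin of $\mathfrak a^*$ (an interior point of $2P$), and $4\rho$ lies in the interior of $2P_+$. $\theta_X(y)=\langle\xi_X,y-\mathbf b\rangle$ with $\mathbf b=\frac1V\int_{2P_+}y\pi(y)dy$ and $\xi_X\in\mathfrak a_t$ the unique element with $\int_{2P_+}\langle v,y\rangle(1-\theta_X(y))\pi(y)dy=0$ for all $v\in\mathfrak a_t$ (the normalized potential of the extremal vector field, as a function on $2P$); $c_X=\min_{\overline{2P}}(1-\theta_X)$. $\mathcal L_X(u)=\frac1V\int_{2P_+}u\,\pi\,[1-\theta_X]\,dy-u(4\rho)$. $\mathcal C_W$ is the set of strictly convex $W$-invariant functions $u$ on $2P$ such that $u-u_G$ is smooth on $\overline{2P}$, where, writing $2P=\{y:\ell_k(y)\ge0,\ k=1,\dots,d\}$ with affine $\ell_k$ defining the facets, $u_G=\frac12\sum_k\ell_k\log\ell_k$ is the Guillemin function. $\hat{\mathcal C}_W=\{u\in\mathcal C_W: u(O)=0,\ \nabla u(O)=0\}$ (for $u\in\mathcal C_W$, $\hat u(y)=u(y)-\langle\nabla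 u(O),y\rangle-u(O)$ lies in $\hat{\mathcal C}_W$). *)

theory Defs
  imports "HOL-Analysis.Analysis"
begin

text \<open>All objects live in the real Euclidean space 'a, playing the role of a* (identified with a
  via the fixed scalar product).\<close>

definition root_refl :: "'a::euclidean_space \<Rightarrow> 'a \<Rightarrow> 'a" where
  "root_refl \<alpha> y = y - (2 * (\<alpha> \<bullet> y) / (\<alpha> \<bullet> \<alpha>)) *\<^sub>R \<alpha>"

inductive_set weyl_group :: "'a::euclidean_space set \<Rightarrow> ('a \<Rightarrow> 'a) set" for R where
  id: "id \<in> weyl_group R"
| step: "w \<in> weyl_group R \<Longrightarrow> \<alpha> \<in> R \<Longrightarrow> root_refl \<alpha> \<circ> w \<in> weyl_group R"

definition positive_root_system :: "'a::euclidean_space set \<Rightarrow> bool" where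
  "positive_root_system R \<longleftrightarrow> finite R \<and> 0 \<notin> R
     \<and> (\<forall>\<alpha>\<in>R. \<forall>\<beta>\<in>R. root_refl \<alpha> \<beta> \<in> R \<union> uminus ` R)
     \<and> (\<forall>\<alpha>\<in>R. \<forall>\<beta>\<in>R. 2 * (\<alpha> \<bullet> \<beta>) / (\<alpha> \<bullet> \<alpha>) \<in> \<int>)
     \<and> (\<forall>\<alpha>\<in>R. \<forall>r::real. r *\<^sub>R \<alpha> \<in> R \<union> uminus ` R \<longrightarrow> r = 1 \<or> r = -1)
     \<and> (\<exists>t. \<forall>\<alpha>\<in>R. t \<bullet> \<alpha> > 0)"

definition rho :: "'a::euclidean_space set \<Rightarrow> 'a" where
  "rho R = (1/2) *\<^sub>R (\<Sum>\<alpha>\<in>R. \<alpha>)"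

definition piR :: "'a::euclidean_space set \<Rightarrow> 'a \<Rightarrow> real" where
  "piR R y = (\<Prod>\<alpha>\<in>R. (\<alpha> \<bullet> y)\<^sup>2)"

definition a_t :: "'a::euclidean_space set \<Rightarrow> 'a set" where
  "a_t R = {v. \<forall>\<alpha>\<in>R. \<alpha> \<bullet> v = 0}"

definition pos_cone :: "'a::euclidean_space set \<Rightarrow> 'a set" where
  "pos_cone R = {y. \<exists>c. (\<forall>\<alpha>\<in>R. 0 \<le> c \<alpha>) \<and> y = (\<Sum>\<alpha>\<in>R. c \<alpha> *\<^sub>R \<alpha>)}"

definition Xi :: "'a::euclidean_space set \<Rightarrow> 'a set" where
  "Xi R = rel_interior (pos_cone R)"

text \<open>The polytope 2P = {y. \<forall>k<d. l_k(y) \<ge> 0} with l_k(y) = a k \<bullet> y + c k.\<close>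
definition ell :: "(nat \<Rightarrow> 'a::euclidean_space) \<Rightarrow> (nat \<Rightarrow> real) \<Rightarrow> nat \<Rightarrow> 'a \<Rightarrow> real" where
  "ell a c k y = a k \<bullet> y + c k"

definition polyQ :: "(nat \<Rightarrow> 'a::euclidean_space) \<Rightarrow> (nat \<Rightarrow> real) \<Rightarrow> nat \<Rightarrow> 'a set" where
  "polyQ a c d = {y. \<forall>k<d. 0 \<le> ell a c k y}"

definition facet_presentation :: "(nat \<Rightarrow> 'a::euclidean_space) \<Rightarrow> (nat \<Rightarrow> real) \<Rightarrow> nat \<Rightarrow> bool" where
  "facet_presentation a c d \<longleftrightarrow>
     bounded (polyQ a c d) \<and> interior (polyQ a c d) \<noteq> {}
     \<and> (\<forall>k<d. {y \<in> polyQ a c d. ell a c k y = 0} facet_of polyQ a c d)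
     \<and> inj_on (\<lambda>k. {y \<in> polyQ a c d. ell a c k y = 0}) {..<d}
     \<and> (\<forall>F. F facet_of polyQ a c d \<longrightarrow> (\<exists>k<d. F = {y \<in> polyQ a c d. ell a c k y = 0}))"

text \<open>2P_+ = 2P \<inter> closure of the positive Weyl chamber.\<close>
definition polyQ_plus :: "'a::euclidean_space set \<Rightarrow> (nat \<Rightarrow> 'a) \<Rightarrow> (nat \<Rightarrow> real) \<Rightarrow> nat \<Rightarrow> 'a set" where
  "polyQ_plus R a c d = polyQ a c d \<inter> {y. \<forall>\<alpha>\<in>R. 0 \<le> \<alpha> \<bullet> y}"

text \<open>Guillemin function (note: in Isabelle ln 0 = 0, so 0 * ln 0 = 0).\<close>
definition guillemin :: "(nat \<Rightarrow> 'a::euclidean_space) \<Rightarrow> (nat \<Rightarrow> real) \<Rightarrow> nat \<Rightarrow> 'a \<Rightarrow> real" where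
  "guillemin a c d y = (1/2) * (\<Sum>k<d. ell a c k y * ln (ell a c k y))"

coinductive smooth_on :: "'a::euclidean_space set \<Rightarrow> ('a \<Rightarrow> real) \<Rightarrow> bool" for U where
  "\<lbrakk>\<forall>x\<in>U. f differentiable (at x); continuous_on U f;
    \<forall>b\<in>Basis. smooth_on U (\<lambda>x. frechet_derivative f (at x) b)\<rbrakk> \<Longrightarrow> smooth_on U f"

definition smooth_on_closed :: "'a::euclidean_space set \<Rightarrow> ('a \<Rightarrow> real) \<Rightarrow> bool" where
  "smooth_on_closed S f \<longleftrightarrow> (\<exists>U g. open U \<and> S \<subseteq> U \<and> smooth_on U g \<and> (\<forall>y\<in>S. f y = g y))"

definition strictly_convex_on :: "'a::real_vector set \<Rightarrow> ('a \<Rightarrow> real) \<Rightarrow> bool" where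
  "strictly_convex_on S f \<longleftrightarrow> convex S \<and>
     (\<forall>x\<in>S. \<forall>y\<in>S. x \<noteq> y \<longrightarrow> (\<forall>t::real. 0 < t \<and> t < 1 \<longrightarrow>
        f ((1 - t) *\<^sub>R x + t *\<^sub>R y) < (1 - t) * f x + t * f y))"

definition C_W :: "'a::euclidean_space set \<Rightarrow> (nat \<Rightarrow> 'a) \<Rightarrow> (nat \<Rightarrow> real) \<Rightarrow> nat \<Rightarrow> ('a \<Rightarrow> real) set" where
  "C_W R a c d = {u. strictly_convex_on (polyQ a c d) u
      \<and> (\<forall>w\<in>weyl_group R. \<forall>y\<in>polyQ a c d. u (w y) = u y)
      \<and> smooth_on_closed (polyQ a c d) (\<lambda>y. u y - guillemin a c d y)}"

definition hatC_W :: "'a::euclidean_space set \<Rightarrow> (nat \<Rightarrow> 'a) \<Rightarrow> (nat \<Rightarrow> real) \<Rightarrow> nat \<Rightarrow> ('a \<Rightarrow> real) set" where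
  "hatC_W R a c d = {u \<in> C_W R a c d. u 0 = 0 \<and> (u has_derivative (\<lambda>h. 0)) (at 0)}"

definition volV :: "'a::euclidean_space set \<Rightarrow> (nat \<Rightarrow> 'a) \<Rightarrow> (nat \<Rightarrow> real) \<Rightarrow> nat \<Rightarrow> real" where
  "volV R a c d = (LINT y : polyQ_plus R a c d | lborel. piR R y)"

definition barycenter :: "'a::euclidean_space set \<Rightarrow> (nat \<Rightarrow> 'a) \<Rightarrow> (nat \<Rightarrow> real) \<Rightarrow> nat \<Rightarrow> 'a" where
  "barycenter R a c d = (1 / volV R a c d) *\<^sub>R (LINT y : polyQ_plus R a c d | lborel. piR R y *\<^sub>R y)"

definition thetaX :: "'a::euclidean_space set \<Rightarrow> (nat \<Rightarrow> 'a) \<Rightarrow> (nat \<Rightarrow> real) \<Rightarrow> nat \<Rightarrow> 'a \<Rightarrow> 'a \<Rightarrow> real" where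
  "thetaX R a c d \<xi> y = \<xi> \<bullet> (y - barycenter R a c d)"

definition is_xiX :: "'a::euclidean_space set \<Rightarrow> (nat \<Rightarrow> 'a) \<Rightarrow> (nat \<Rightarrow> real) \<Rightarrow> nat \<Rightarrow> 'a \<Rightarrow> bool" where
  "is_xiX R a c d \<xi> \<longleftrightarrow> \<xi> \<in> a_t R \<and>
     (\<forall>v\<in>a_t R. (LINT y : polyQ_plus R a c d | lborel.
        (v \<bullet> y) * (1 - thetaX R a c d \<xi> y) * piR R y) = 0)"

definition cX :: "'a::euclidean_space set \<Rightarrow> (nat \<Rightarrow> 'a) \<Rightarrow> (nat \<Rightarrow> real) \<Rightarrow> nat \<Rightarrow> 'a \<Rightarrow> real" where
  "cX R a c d \<xi> = Inf ((\<lambda>y. 1 - thetaX R a c d \<xi> y) ` polyQ a c d)"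

definition bX :: "'a::euclidean_space set \<Rightarrow> (nat \<Rightarrow> 'a) \<Rightarrow> (nat \<Rightarrow> real) \<Rightarrow> nat \<Rightarrow> 'a \<Rightarrow> 'a" where
  "bX R a c d \<xi> = (1 / volV R a c d) *\<^sub>R
     (LINT y : polyQ_plus R a c d | lborel. ((1 - thetaX R a c d \<xi> y) * piR R y) *\<^sub>R y)"

definition LX :: "'a::euclidean_space set \<Rightarrow> (nat \<Rightarrow> 'a) \<Rightarrow> (nat \<Rightarrow> real) \<Rightarrow> nat \<Rightarrow> 'a \<Rightarrow> ('a \<Rightarrow> real) \<Rightarrow> real" where
  "LX R a c d \<xi> u = (1 / volV R a c d) *
     (LINT y : polyQ_plus R a c d | lborel. u y * piR R y * (1 - thetaX R a c d \<xi> y))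
     - u (4 *\<^sub>R rho R)"

end

theory Submission
  imports Defs "HOL-Real_Asymp.Real_Asymp"
begin

lemma sc_le:
  assumes "strictly_convex_on S f" "x \<in> S" "y \<in> S" "0 \<le> t" "t \<le> 1"
  shows "f ((1 - t) *\<^sub>R x + t *\<^sub>R y) \<le> (1 - t) * f x + t * f y"
proof -
  consider "t = 0" | "t = 1" | "x = y" | "0 < t \<and> t < 1 \<and> x \<noteq> y" using assms by linarith
  then show ?thesis
  proof cases
    case 3 then show ?thesis by (simp add: algebra_simps flip: scaleR_add_left)
  next
    case 4 then show ?thesis using assms unfolding strictly_convex_on_def by (meson less_imp_le)
  qed auto
qed

lemma sc_tangent:
  fixes u :: "'a::euclidean_space \<Rightarrow> real"
  assumes sc: "strictly_convex_on S u" and x: "x \<in> S" and y: "y \<in> S"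
    and D: "(u has_derivative D) (at x)"
  shows "u x + D (y - x) \<le> u y"
proof (rule ccontr)
  assume "\<not> ?thesis"
  hence lt: "u y - u x < D (y - x)" by simp
  define h where "h = y - x"
  define K where "K = u y - u x"
  have lin: "linear D" using D has_derivative_linear by blast
  have "((\<lambda>t. x + t *\<^sub>R h) has_derivative (\<lambda>t. t *\<^sub>R h)) (at 0)"
    by (auto intro!: derivative_eq_intros)
  hence "((u \<circ> (\<lambda>t. x + t *\<^sub>R h)) has_derivative (D \<circ> (\<lambda>t. t *\<^sub>R h))) (at 0)"
    using D by (intro diff_chain_at) auto
  hence "((\<lambda>t. u (x + t *\<^sub>R h)) has_derivative (\<lambda>t. t * D h)) (at 0)"
    using lin by (simp add: o_def linear_scale)
  moreover have "(\<lambda>t. t * D h) = (*) (D h)" by (auto simp: fun_eq_iff)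
  ultimately have d1: "DERIV (\<lambda>t. u (x + t *\<^sub>R h)) 0 :> D h"
    by (simp add: has_field_derivative_def)
  have "DERIV (\<lambda>t. u (x + t *\<^sub>R h) - t * K) 0 :> D h - K"
    by (auto intro!: derivative_eq_intros d1)
  moreover have "0 < D h - K" using lt by (simp add: h_def K_def)
  ultimately have "\<exists>d > 0. \<forall>t > 0. t < d \<longrightarrow> u (x + 0 *\<^sub>R h) - 0 * K < u (x + (0 + t) *\<^sub>R h) - (0 + t) * K"
    by (rule DERIV_pos_inc_right)
  then obtain d where d: "d > 0" "\<And>t. t > 0 \<Longrightarrow> t < d \<Longrightarrow> u x < u (x + t *\<^sub>R h) - t * K"
    by auto
  define t where "t = min (d/2) (1/2)"
  have t: "0 < t" "t < d" "t \<le> 1" using d by (auto simp: t_def)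
  have "u ((1 - t) *\<^sub>R x + t *\<^sub>R y) \<le> (1 - t) * u x + t * u y"
    using sc_le[OF sc x y] t by auto
  moreover have "(1 - t) *\<^sub>R x + t *\<^sub>R y = x + t *\<^sub>R h" by (simp add: h_def algebra_simps)
  ultimately show False using d(2)[OF t(1,2)] by (simp add: K_def algebra_simps)
qed

lemma xlnx_cont: "continuous_on {0..} (\<lambda>x::real. x * ln x)"
proof -
  have "continuous (at x within {0..}) (\<lambda>x::real. x * ln x)" if "x \<ge> 0" for x
  proof (cases "x = 0")
    case True
    have "((\<lambda>x::real. x * ln x) \<longlongrightarrow> 0) (at_right 0)" by real_asymp
    hence "((\<lambda>x::real. x * ln x) \<longlongrightarrow> 0) (at 0 within {0<..})" by simp
    hence "((\<lambda>x::real. x * ln x) \<longlongrightarrow> 0) (at 0 within {0..})"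
    proof -
      have e: "{0..} \<inter> UNIV - {0::real} = {0<..} \<inter> UNIV - {0}" by auto
      have "at (0::real) within {0..} = at 0 within {0<..}"
        by (rule at_within_nhd[OF _ _ e]) auto
      then show ?thesis using \<open>((\<lambda>x::real. x * ln x) \<longlongrightarrow> 0) (at 0 within {0<..})\<close> by simp
    qed
    then show ?thesis using True by (simp add: continuous_within)
  next
    case False
    hence "x > 0" using that by simp
    hence "isCont (\<lambda>x::real. x * ln x) x" by (auto intro!: continuous_intros)
    then show ?thesis using continuous_at_imp_continuous_within by blast
  qed
  then show ?thesis by (simp add: continuous_on_eq_continuous_within)
qed
lemma deriv_line:
  fixes u :: "'a::euclidean_space \<Rightarrow> real"
  assumes D: "(u has_derivative D) (at x)"
  shows "DERIV (\<lambda>t. u (x + t *\<^sub>R h)) 0 :> D h"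
proof -
  have lin: "linear D" using D has_derivative_linear by blast
  have "((\<lambda>t. x + t *\<^sub>R h) has_derivative (\<lambda>t. t *\<^sub>R h)) (at 0)"
    by (auto intro!: derivative_eq_intros)
  hence "((u \<circ> (\<lambda>t. x + t *\<^sub>R h)) has_derivative (D \<circ> (\<lambda>t. t *\<^sub>R h))) (at 0)"
    using D by (intro diff_chain_at) auto
  hence "((\<lambda>t. u (x + t *\<^sub>R h)) has_derivative (\<lambda>t. t * D h)) (at 0)"
    using lin by (simp add: o_def linear_scale)
  moreover have "(\<lambda>t. t * D h) = (*) (D h)" by (auto simp: fun_eq_iff)
  ultimately show ?thesis
    by (simp add: has_field_derivative_def)
qed

lemma halfspace_int:
  fixes a x :: "'a::euclidean_space"
  assumes "x \<in> interior S" "\<forall>y\<in>S. 0 \<le> a \<bullet> y + c" "a \<noteq> 0"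
  shows "0 < a \<bullet> x + c"
proof -
  obtain e where e: "e > 0" "ball x e \<subseteq> S" using assms(1) mem_interior by blast
  define y where "y = x - (e / 2 / norm a) *\<^sub>R a"
  have "dist x y = e / 2" using e assms(3) by (simp add: y_def dist_norm)
  hence "y \<in> S" using e by auto
  hence "0 \<le> a \<bullet> y + c" using assms(2) by auto
  moreover have "a \<bullet> y = a \<bullet> x - (e / 2) * norm a"
    using assms(3) by (simp add: y_def inner_diff_right power2_norm_eq_inner[symmetric] power2_eq_square)
  moreover have "0 < (e/2) * norm a" using e assms(3) by simp
  ultimately show ?thesis by linarith
qed

lemma refl_mono:
  fixes u :: "'a::euclidean_space \<Rightarrow> real"
  assumes sc: "strictly_convex_on Q u" and inv: "\<forall>y\<in>Q. u (root_refl \<alpha> y) = u y"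
    and map: "\<forall>y\<in>Q. root_refl \<alpha> y \<in> Q"
    and x: "x \<in> interior Q" and ax: "0 \<le> \<alpha> \<bullet> x" and an: "\<alpha> \<noteq> 0"
    and D: "(u has_derivative D) (at x)"
  shows "0 \<le> D \<alpha>"
proof (rule ccontr)
  assume "\<not> ?thesis"
  hence neg: "D \<alpha> < 0" by simp
  from DERIV_neg_dec_right[OF deriv_line[OF D, of \<alpha>] neg]
  obtain d where d: "d > 0" "\<And>t. t > 0 \<Longrightarrow> t < d \<Longrightarrow> u (x + t *\<^sub>R \<alpha>) < u x"
    by auto
  obtain e where e: "e > 0" "ball x e \<subseteq> Q" using x mem_interior by blast
  define t where "t = min (d/2) (e / (2 * norm \<alpha>))"
  have t: "t > 0" "t < d" "t * norm \<alpha> < e" using d e an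
    by (auto simp: t_def min_def field_simps)
  define y where "y = x + t *\<^sub>R \<alpha>"
  have "dist x y < e" using t by (simp add: y_def dist_norm)
  hence yQ: "y \<in> Q" using e by auto
  have uy: "u y < u x" using d(2)[OF t(1,2)] by (simp add: y_def)
  have aa: "\<alpha> \<bullet> \<alpha> > 0" using an by simp
  define k where "k = (\<alpha> \<bullet> x) / (\<alpha> \<bullet> \<alpha>)"
  have k: "k \<ge> 0" using ax aa by (simp add: k_def)
  have "2 * (\<alpha> \<bullet> y) / (\<alpha> \<bullet> \<alpha>) = 2 * k + 2 * t"
    using aa by (simp add: y_def k_def inner_add_right field_simps)
  hence ry: "root_refl \<alpha> y = x - (t + 2 * k) *\<^sub>R \<alpha>"
    apply (simp add: root_refl_def y_def algebra_simps)
    by (metis mult.commute mult_2 scaleR_add_left)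
  define s where "s = t / (2 * t + 2 * k)"
  have s: "0 \<le> s" "s \<le> 1" using t k by (auto simp: s_def field_simps)
  have "(1 - s) *\<^sub>R y + s *\<^sub>R root_refl \<alpha> y = x + ((1 - s) * t - s * (t + 2 * k)) *\<^sub>R \<alpha>"
    unfolding ry apply (simp add: y_def algebra_simps)
    by (metis mult.commute mult.left_commute mult_2 scaleR_add_left)
  moreover have "(1 - s) * t - s * (t + 2 * k) = 0"
    using t k by (simp add: s_def field_simps)
  ultimately have comb: "(1 - s) *\<^sub>R y + s *\<^sub>R root_refl \<alpha> y = x" by simp
  have "u x \<le> (1 - s) * u y + s * u (root_refl \<alpha> y)"
    using sc_le[OF sc yQ map[rule_format, OF yQ] s] comb by simp
  also have "\<dots> = u y" using inv yQ by (simp add: algebra_simps)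
  finally show False using uy by simp
qed

lemma guillemin_diff:
  fixes x :: "'a::euclidean_space"
  assumes x: "x \<in> interior (polyQ a c d)"
  shows "guillemin a c d differentiable (at x)"
proof -
  have tm: "(\<lambda>y. ell a c k y * ln (ell a c k y)) differentiable (at x)" if k: "k < d" for k
  proof (cases "a k = 0")
    case True
    then show ?thesis by (simp add: ell_def)
  next
    case False
    have "\<forall>y\<in>polyQ a c d. 0 \<le> a k \<bullet> y + c k" using k by (auto simp: polyQ_def ell_def)
    from halfspace_int[OF x this False] have pos: "0 < a k \<bullet> x + c k" .
    have l: "((\<lambda>y. a k \<bullet> y + c k) has_derivative (\<lambda>h. a k \<bullet> h)) (at x)"
      by (auto intro!: derivative_eq_intros)
    show ?thesis unfolding ell_def differentiable_def
      using has_derivative_mult[OF l has_derivative_ln[OF pos l]] by blast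
  qed
  show ?thesis unfolding guillemin_def
    using tm by (intro differentiable_mult differentiable_const differentiable_sum) auto
qed

lemma CW_diff:
  fixes u :: "'a::euclidean_space \<Rightarrow> real"
  assumes u: "u \<in> C_W R a c d" and x: "x \<in> interior (polyQ a c d)"
  shows "u differentiable (at x)"
proof -
  from u obtain U g where U: "open U" "polyQ a c d \<subseteq> U" "smooth_on U g"
    "\<forall>y\<in>polyQ a c d. u y - guillemin a c d y = g y"
    by (auto simp: C_W_def smooth_on_closed_def)
  have "x \<in> U" using x U(2) interior_subset by blast
  hence "g differentiable (at x)" using U(3) by (auto elim: smooth_on.cases)
  moreover have "guillemin a c d differentiable (at x)" using guillemin_diff[OF x] .
  ultimately have "(\<lambda>y. g y + guillemin a c d y) differentiable (at x)" by (rule differentiable_add)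
  then obtain D where D: "((\<lambda>y. g y + guillemin a c d y) has_derivative D) (at x)"
    by (auto simp: differentiable_def)
  have "(u has_derivative D) (at x)"
  proof (rule has_derivative_transform_within_open[OF D open_interior x])
    fix y assume "y \<in> interior (polyQ a c d)"
    hence "y \<in> polyQ a c d" using interior_subset by blast
    then show "g y + guillemin a c d y = u y" using U(4) by force
  qed
  then show ?thesis by (auto simp: differentiable_def)
qed

lemma CW_cont:
  fixes u :: "'a::euclidean_space \<Rightarrow> real"
  assumes u: "u \<in> C_W R a c d"
  shows "continuous_on (polyQ a c d) u"
proof -
  from u obtain U g where U: "open U" "polyQ a c d \<subseteq> U" "smooth_on U g"
    "\<forall>y\<in>polyQ a c d. u y - guillemin a c d y = g y"
    by (auto simp: C_W_def smooth_on_closed_def)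
  have "continuous_on U g" using U(3) by (auto elim: smooth_on.cases)
  hence gc: "continuous_on (polyQ a c d) g" using U(2) continuous_on_subset by blast
  have tm: "continuous_on (polyQ a c d) (\<lambda>y. ell a c k y * ln (ell a c k y))" if k: "k < d" for k
  proof (rule continuous_on_compose2[OF xlnx_cont])
    show "continuous_on (polyQ a c d) (ell a c k)" unfolding ell_def by (intro continuous_intros)
    show "ell a c k ` polyQ a c d \<subseteq> {0..}" using k by (auto simp: polyQ_def)
  qed
  have "continuous_on (polyQ a c d) (guillemin a c d)" unfolding guillemin_def
    by (rule continuous_on_mult[OF continuous_on_const], rule continuous_on_sum) (use tm in auto)
  hence "continuous_on (polyQ a c d) (\<lambda>y. g y + guillemin a c d y)" using gc by (intro continuous_intros)
  then show ?thesis
    by (rule continuous_on_eq) (use U(4) in force)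
qed

lemma polyQ_eq: "polyQ a c d = (\<Inter>k\<in>{..<d}. {y. - c k \<le> a k \<bullet> y})"
proof -
  have *: "\<And>y k. (0 \<le> a k \<bullet> y + c k) = (- c k \<le> a k \<bullet> y)" by linarith
  show ?thesis by (auto simp: polyQ_def ell_def *)
qed

lemma polyQ_plus_eq: "polyQ_plus R a c d = polyQ a c d \<inter> (\<Inter>\<alpha>\<in>R. {y. 0 \<le> \<alpha> \<bullet> y})"
  by (auto simp: polyQ_plus_def)

lemma closed_polyQ: "closed (polyQ a c d)"
  unfolding polyQ_eq by (intro closed_INT ballI closed_halfspace_ge)

lemma convex_polyQ: "convex (polyQ a c d)"
  unfolding polyQ_eq by (intro convex_INT ballI convex_halfspace_ge)

lemma closed_polyQ_plus: "closed (polyQ_plus R a c d)"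
  unfolding polyQ_plus_eq by (intro closed_Int closed_polyQ closed_INT ballI closed_halfspace_ge)

lemma weighted_mean_ineq:
  fixes S :: "'a::euclidean_space set" and w :: "'a \<Rightarrow> real"
  assumes iw: "integrable lborel (\<lambda>y. indicator S y *\<^sub>R w y)"
    and iwy: "integrable lborel (\<lambda>y. indicator S y *\<^sub>R (w y *\<^sub>R y))"
    and w0: "\<And>y. y \<in> S \<Longrightarrow> 0 \<le> w y"
    and M: "integral\<^sup>L lborel (\<lambda>y. indicator S y *\<^sub>R w y) = V" and V: "V > 0"
    and h: "\<forall>y\<in>S. 0 \<le> v \<bullet> y + e"
  shows "0 \<le> v \<bullet> ((1 / V) *\<^sub>R integral\<^sup>L lborel (\<lambda>y. indicator S y *\<^sub>R (w y *\<^sub>R y))) + e"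
proof -
  have "integral\<^sup>L lborel (\<lambda>y. v \<bullet> (indicator S y *\<^sub>R (w y *\<^sub>R y))) = v \<bullet> integral\<^sup>L lborel (\<lambda>y. indicator S y *\<^sub>R (w y *\<^sub>R y))"
    using iwy by (rule integral_inner_right)
  note i1 = this
  have i2: "integral\<^sup>L lborel (\<lambda>y. e * (indicator S y *\<^sub>R w y)) = e * V" using M by simp
  have eq: "integral\<^sup>L lborel (\<lambda>y. v \<bullet> (indicator S y *\<^sub>R (w y *\<^sub>R y)) + e * (indicator S y *\<^sub>R w y))
     = v \<bullet> integral\<^sup>L lborel (\<lambda>y. indicator S y *\<^sub>R (w y *\<^sub>R y)) + e * V"
  proof -
    have iv: "integrable lborel (\<lambda>y. v \<bullet> (indicator S y *\<^sub>R (w y *\<^sub>R y)))"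
      using iwy by (rule integrable_inner_right)
    have ie: "integrable lborel (\<lambda>y. e * (indicator S y *\<^sub>R w y))"
      using iw by (intro integrable_mult_right)
    show ?thesis
      using Bochner_Integration.integral_add[OF iv ie] i1 i2 by simp
  qed
  have "0 \<le> integral\<^sup>L lborel (\<lambda>y. v \<bullet> (indicator S y *\<^sub>R (w y *\<^sub>R y)) + e * (indicator S y *\<^sub>R w y))"
  proof (rule Bochner_Integration.integral_nonneg)
    fix y
    show "0 \<le> v \<bullet> (indicator S y *\<^sub>R (w y *\<^sub>R y)) + e * (indicator S y *\<^sub>R w y)"
    proof (cases "y \<in> S")
      case True
      then have "v \<bullet> (indicator S y *\<^sub>R (w y *\<^sub>R y)) + e * (indicator S y *\<^sub>R w y) = w y * (v \<bullet> y + e)"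
        by (simp add: algebra_simps)
      then show ?thesis using True w0 h by simp
    qed simp
  qed
  hence "0 \<le> v \<bullet> integral\<^sup>L lborel (\<lambda>y. indicator S y *\<^sub>R (w y *\<^sub>R y)) + e * V" using eq by simp
  hence "0 \<le> (1/V) * (v \<bullet> integral\<^sup>L lborel (\<lambda>y. indicator S y *\<^sub>R (w y *\<^sub>R y)) + e * V)" using V by simp
  then show ?thesis using V by (simp add: algebra_simps)
qed

theorem proposition4p4:
  fixes R :: "'a::euclidean_space set"
    and a :: "nat \<Rightarrow> 'a" and c :: "nat \<Rightarrow> real" and d :: nat and \<xi> :: 'a
  assumes "positive_root_system R"
    and "facet_presentation a c d"
    and "\<forall>w\<in>weyl_group R. w ` polyQ a c d = polyQ a c d"
    and "0 \<in> interior (polyQ a c d)"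
    and "4 *\<^sub>R rho R \<in> interior (polyQ_plus R a c d)"
    and "is_xiX R a c d \<xi>"
    and "cX R a c d \<xi> > 0"
    and "bX R a c d \<xi> - 4 *\<^sub>R rho R \<in> Xi R"
  shows "\<exists>l>0. \<forall>u\<in>hatC_W R a c d.
           LX R a c d \<xi> u \<ge> l * (LINT y : polyQ_plus R a c d | lborel.
                                   u y * piR R y * (1 - thetaX R a c d \<xi> y))"
proof -
  note prs = assms(1) and fp = assms(2) and Winv = assms(3) and O = assms(4) and q_int = assms(5)
    and cpos = assms(7) and Xi = assms(8)
  define Q where "Q = polyQ a c d"
  define S where "S = polyQ_plus R a c d"
  define V where "V = volV R a c d"
  define \<theta> where "\<theta> = thetaX R a c d \<xi>"
  define q where "q = 4 *\<^sub>R rho R"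
  define B where "B = bX R a c d \<xi>"
  define \<pi> where "\<pi> = piR R"
  define w where "w = (\<lambda>y. (1 - \<theta> y) * \<pi> y)"
  have finR: "finite R" and R0: "0 \<notin> R" using prs by (auto simp: positive_root_system_def)
  have SQ: "S \<subseteq> Q" by (auto simp: S_def Q_def polyQ_plus_def)
  have clQ: "closed Q" and cvQ: "convex Q" by (auto simp: Q_def closed_polyQ convex_polyQ)
  have bQ: "bounded Q" using fp by (simp add: facet_presentation_def Q_def)
  have cQ: "compact Q" using clQ bQ by (simp add: compact_eq_bounded_closed)
  have cS: "compact S" using closed_polyQ_plus bQ SQ
    by (metis S_def bounded_subset compact_eq_bounded_closed)
  have qS: "q \<in> interior S" using q_int by (simp add: q_def S_def)
  hence qQ: "q \<in> interior Q" using SQ interior_mono by blast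
  have O': "0 \<in> interior Q" using O by (simp add: Q_def)
  have aq: "0 < \<alpha> \<bullet> q" if "\<alpha> \<in> R" for \<alpha>
  proof -
    have "\<forall>y\<in>S. 0 \<le> \<alpha> \<bullet> y + 0" using that by (auto simp: S_def polyQ_plus_def)
    from halfspace_int[OF qS this] that R0 show ?thesis by auto
  qed
  have piq: "0 < \<pi> q" unfolding \<pi>_def piR_def
  proof (intro prod_pos)
    fix \<alpha> assume "\<alpha> \<in> R"
    from aq[OF this] show "0 < (\<alpha> \<bullet> q)\<^sup>2" by simp
  qed
  have pi0: "0 \<le> \<pi> y" for y unfolding \<pi>_def piR_def by (intro prod_nonneg) auto
  have cpi: "continuous_on UNIV \<pi>" unfolding \<pi>_def piR_def by (intro continuous_intros)
  have cth: "continuous_on UNIV \<theta>" unfolding \<theta>_def thetaX_def by (intro continuous_intros)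
  have th1: "0 \<le> 1 - \<theta> y" if "y \<in> Q" for y
  proof -
    have "compact ((\<lambda>y. 1 - \<theta> y) ` Q)" using cQ cth
      by (intro compact_continuous_image continuous_intros) (auto intro: continuous_on_subset)
    hence "bdd_below ((\<lambda>y. 1 - \<theta> y) ` Q)" by (simp add: bounded_imp_bdd_below compact_imp_bounded)
    hence "cX R a c d \<xi> \<le> 1 - \<theta> y" unfolding cX_def \<theta>_def Q_def[symmetric] using that
      by (intro cInf_lower) auto
    then show ?thesis using cpos by simp
  qed
  have w0: "0 \<le> w y" if "y \<in> S" for y using th1 that SQ pi0 by (auto simp: w_def)
  have cw: "continuous_on UNIV w" unfolding w_def using cpi cth by (intro continuous_intros)
  have iw: "integrable lborel (\<lambda>y. indicator S y *\<^sub>R w y)"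
    using borel_integrable_compact[OF cS] cw continuous_on_subset by blast
  have iwy: "integrable lborel (\<lambda>y. indicator S y *\<^sub>R (w y *\<^sub>R y))"
    using borel_integrable_compact[OF cS] cw continuous_on_subset
    by (metis continuous_on_id continuous_on_scaleR top_greatest)
  have ip: "integrable lborel (\<lambda>y. indicator S y *\<^sub>R \<pi> y)"
    using borel_integrable_compact[OF cS] cpi continuous_on_subset by blast
  have ipy: "integrable lborel (\<lambda>y. indicator S y *\<^sub>R (\<pi> y *\<^sub>R y))"
    using borel_integrable_compact[OF cS] cpi continuous_on_subset
    by (metis continuous_on_id continuous_on_scaleR top_greatest)
  have Vdef: "V = integral\<^sup>L lborel (\<lambda>y. indicator S y *\<^sub>R \<pi> y)"
    by (simp add: V_def volV_def S_def \<pi>_def set_lebesgue_integral_def)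
  have Vpos: "V > 0"
  proof -
    have "isCont \<pi> q" using cpi by (simp add: continuous_on_eq_continuous_at)
    then obtain \<delta> where \<delta>: "\<delta> > 0" "\<And>y. dist y q < \<delta> \<Longrightarrow> dist (\<pi> y) (\<pi> q) < \<pi> q / 2"
      using piq unfolding continuous_at_eps_delta by (metis half_gt_zero)
    obtain e where e: "e > 0" "ball q e \<subseteq> S" using qS mem_interior by blast
    define r where "r = min \<delta> e"
    have r: "r > 0" using \<delta> e by (simp add: r_def)
    have bS: "ball q r \<subseteq> S" using e by (auto simp: r_def)
    have ib: "integrable lborel (\<lambda>y. (\<pi> q / 2) * indicator (ball q r) y)"
      using emeasure_bounded_finite[of "ball q r"] by (intro integrable_mult_right integrable_real_indicator) auto
    have "(\<pi> q / 2) * measure lborel (ball q r) = integral\<^sup>L lborel (\<lambda>y. (\<pi> q / 2) * indicator (ball q r) y)"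
      by simp
    also have "\<dots> \<le> integral\<^sup>L lborel (\<lambda>y. indicator S y *\<^sub>R \<pi> y)"
    proof (rule integral_mono[OF ib ip])
      fix y
      show "\<pi> q / 2 * indicator (ball q r) y \<le> indicator S y *\<^sub>R \<pi> y"
      proof (cases "y \<in> ball q r")
        case True
        hence "dist y q < \<delta>" by (simp add: r_def dist_commute)
        from \<delta>(2)[OF this] have "\<pi> q / 2 \<le> \<pi> y" by (auto simp: dist_real_def abs_if split: if_splits)
        then show ?thesis using True bS by auto
      next
        case False then show ?thesis using pi0 by (simp add: indicator_def)
      qed
    qed
    finally have "(\<pi> q / 2) * measure lborel (ball q r) \<le> V" by (simp add: Vdef)
    moreover have "0 < (\<pi> q / 2) * measure lborel (ball q r)"
      using content_ball_pos[OF r] piq by simp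
    ultimately show ?thesis by linarith
  qed
  define P where "P = integral\<^sup>L lborel (\<lambda>y. indicator S y *\<^sub>R (\<pi> y *\<^sub>R y))"
  have bary: "barycenter R a c d = (1 / V) *\<^sub>R P"
    by (simp add: barycenter_def P_def V_def S_def \<pi>_def set_lebesgue_integral_def)
  have mass: "integral\<^sup>L lborel (\<lambda>y. indicator S y *\<^sub>R w y) = V"
  proof -
    define bb where "bb = barycenter R a c d"
    have eqf: "(\<lambda>y. indicator S y *\<^sub>R w y) = (\<lambda>y. (indicator S y *\<^sub>R \<pi> y
        - \<xi> \<bullet> (indicator S y *\<^sub>R (\<pi> y *\<^sub>R y))) + (\<xi> \<bullet> bb) * (indicator S y *\<^sub>R \<pi> y))"
      by (auto simp: fun_eq_iff w_def \<theta>_def thetaX_def bb_def inner_diff_right algebra_simps indicator_def)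
    have i1: "integrable lborel (\<lambda>y. \<xi> \<bullet> (indicator S y *\<^sub>R (\<pi> y *\<^sub>R y)))"
      using ipy by (rule integrable_inner_right)
    have i2: "integrable lborel (\<lambda>y. (\<xi> \<bullet> bb) * (indicator S y *\<^sub>R \<pi> y))"
      using ip by (intro integrable_mult_right)
    have "integral\<^sup>L lborel (\<lambda>y. indicator S y *\<^sub>R w y) = (V - \<xi> \<bullet> P) + (\<xi> \<bullet> bb) * V"
      unfolding eqf
      apply (subst Bochner_Integration.integral_add[OF Bochner_Integration.integrable_diff[OF ip i1] i2])
      apply (subst Bochner_Integration.integral_diff[OF ip i1])
      apply (subst integral_inner_right[OF ipy])
      using Vdef P_def by simp
    also have "(\<xi> \<bullet> bb) * V = \<xi> \<bullet> P" using Vpos by (simp add: bb_def bary)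
    finally show ?thesis by simp
  qed
  have Bdef: "B = (1 / V) *\<^sub>R integral\<^sup>L lborel (\<lambda>y. indicator S y *\<^sub>R (w y *\<^sub>R y))"
    by (simp add: B_def bX_def V_def S_def w_def \<theta>_def \<pi>_def set_lebesgue_integral_def)
  have BQ: "B \<in> Q"
  proof -
    have "0 \<le> ell a c k B" if k: "k < d" for k
    proof -
      have "\<forall>y\<in>S. 0 \<le> a k \<bullet> y + c k" using SQ k by (auto simp: Q_def polyQ_def ell_def)
      from weighted_mean_ineq[OF iw iwy w0 mass Vpos this] show ?thesis
        by (simp add: Bdef ell_def)
    qed
    then show ?thesis by (simp add: Q_def polyQ_def)
  qed
  have p: "B - q \<in> rel_interior (pos_cone R)" using Xi by (simp add: Xi_def B_def q_def)
  then obtain e where e: "e > 0" "cball (B - q) e \<inter> affine hull (pos_cone R) \<subseteq> pos_cone R"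
    and pc: "B - q \<in> pos_cone R" unfolding mem_rel_interior_cball by blast
  define s where "s = min (1/2) (e / (norm B + 1))"
  have np: "0 < norm B + 1" using norm_ge_zero[of B] by linarith
  have s: "0 < s" "s \<le> 1/2" using e np by (auto simp: s_def min_def)
  have "s * (norm B + 1) \<le> e"
  proof -
    have "s \<le> e / (norm B + 1)" by (simp add: s_def)
    then show ?thesis by (simp add: field_simps add_pos_nonneg)
  qed
  hence snB: "s * norm B \<le> e" using s by (simp add: algebra_simps)
  define t where "t = (B - q) - s *\<^sub>R B"
  have qc: "q \<in> pos_cone R"
  proof -
    have "q = (\<Sum>\<alpha>\<in>R. 2 *\<^sub>R \<alpha>)" by (simp add: q_def rho_def scaleR_sum_right)
    then show ?thesis unfolding pos_cone_def by (intro CollectI exI[of _ "\<lambda>_. 2"]) auto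
  qed
  have zc: "0 \<in> pos_cone R" unfolding pos_cone_def by (intro CollectI exI[of _ "\<lambda>_. 0"]) auto
  have taff: "t \<in> affine hull (pos_cone R)"
  proof -
    have A: "affine (affine hull (pos_cone R))" by simp
    have m: "2 *\<^sub>R 0 + (-1) *\<^sub>R q \<in> affine hull (pos_cone R)"
      by (rule mem_affine[OF A]) (use zc qc in \<open>auto intro: hull_inc\<close>)
    have "(1 - s) *\<^sub>R (B - q) + s *\<^sub>R (2 *\<^sub>R 0 + (-1) *\<^sub>R q) \<in> affine hull (pos_cone R)"
      by (rule mem_affine[OF A _ m]) (use pc in \<open>auto intro: hull_inc\<close>)
    moreover have "(1 - s) *\<^sub>R (B - q) + s *\<^sub>R (2 *\<^sub>R 0 + (-1) *\<^sub>R q) = t"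
      by (simp add: t_def algebra_simps)
    ultimately show ?thesis by simp
  qed
  have "dist (B - q) t = s * norm B" using s by (simp add: t_def dist_norm)
  hence "t \<in> cball (B - q) e" using snB by simp
  hence tc: "t \<in> pos_cone R" using e(2) taff by blast
  define z where "z = (1 - s) *\<^sub>R B"
  have zq: "z - q = t" by (simp add: z_def t_def algebra_simps)
  have zQ: "z \<in> interior Q"
    using mem_interior_convex_shrink[OF cvQ O' BQ s(1)] s by (simp add: z_def algebra_simps)
  have zQ': "z \<in> Q" using zQ interior_subset by blast
  have qQ': "q \<in> Q" using qQ interior_subset by blast
  have cu: "continuous_on S (\<lambda>y. u y * \<pi> y * (1 - \<theta> y))" if "u \<in> C_W R a c d" for u
  proof -
    have "continuous_on S u" using CW_cont[OF that] SQ continuous_on_subset by (metis Q_def)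
    then show ?thesis using cpi cth by (intro continuous_intros) (auto intro: continuous_on_subset)
  qed
  show ?thesis
  proof (intro exI[of _ "s / V"] conjI ballI)
    show "0 < s / V" using s Vpos by simp
    fix u assume uh: "u \<in> hatC_W R a c d"
    hence uC: "u \<in> C_W R a c d" and u0: "u 0 = 0" by (auto simp: hatC_W_def)
    have sc: "strictly_convex_on Q u" using uC by (simp add: C_W_def Q_def)
    have inv: "\<forall>w\<in>weyl_group R. \<forall>y\<in>Q. u (w y) = u y" using uC by (simp add: C_W_def Q_def)
    obtain Dq where Dq: "(u has_derivative Dq) (at q)"
      using CW_diff[OF uC qQ[unfolded Q_def]] by (auto simp: differentiable_def)
    obtain Dz where Dz: "(u has_derivative Dz) (at z)"
      using CW_diff[OF uC zQ[unfolded Q_def]] by (auto simp: differentiable_def)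
    have linq: "linear Dq" using Dq has_derivative_linear by blast
    have blz: "bounded_linear Dz" using Dz has_derivative_bounded_linear by blast
    hence linz: "linear Dz" by (rule bounded_linear.linear)
    have Dqa: "0 \<le> Dq \<alpha>" if al: "\<alpha> \<in> R" for \<alpha>
    proof -
      have W: "root_refl \<alpha> \<circ> id \<in> weyl_group R" by (rule weyl_group.step[OF weyl_group.id al])
      have i: "\<forall>y\<in>Q. u (root_refl \<alpha> y) = u y" using inv W by fastforce
      have mp: "\<forall>y\<in>Q. root_refl \<alpha> y \<in> Q" using Winv W by (fastforce simp: Q_def)
      show ?thesis
        by (rule refl_mono[OF sc i mp qQ _ _ Dq]) (use aq[OF al] al R0 in auto)
    qed
    have T2: "0 \<le> Dq t"
    proof -
      obtain cc where cc: "\<forall>\<alpha>\<in>R. 0 \<le> cc \<alpha>" "t = (\<Sum>\<alpha>\<in>R. cc \<alpha> *\<^sub>R \<alpha>)"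
        using tc unfolding pos_cone_def by blast
      have "Dq t = (\<Sum>\<alpha>\<in>R. cc \<alpha> * Dq \<alpha>)"
        unfolding cc(2) by (simp add: linear_sum[OF linq] linear_scale[OF linq])
      also have "\<dots> \<ge> 0" using cc(1) Dqa by (intro sum_nonneg) auto
      finally show ?thesis .
    qed
    have T1: "u q + Dq (z - q) \<le> u z" by (rule sc_tangent[OF sc qQ' zQ' Dq])
    have O'': "0 \<in> Q" using O' interior_subset by blast
    have T3: "u z + Dz (0 - z) \<le> u 0" by (rule sc_tangent[OF sc zQ' O'' Dz])
    define I where "I = integral\<^sup>L lborel (\<lambda>y. indicator S y *\<^sub>R (u y * \<pi> y * (1 - \<theta> y)))"
    define IW where "IW = integral\<^sup>L lborel (\<lambda>y. indicator S y *\<^sub>R (w y *\<^sub>R y))"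
    have iu: "integrable lborel (\<lambda>y. indicator S y *\<^sub>R (u y * \<pi> y * (1 - \<theta> y)))"
      using borel_integrable_compact[OF cS cu[OF uC]] .
    have ig1: "integrable lborel (\<lambda>y. (u z - Dz z) * (indicator S y *\<^sub>R w y))"
      using iw by (intro integrable_mult_right)
    have ig2: "integrable lborel (\<lambda>y. Dz (indicator S y *\<^sub>R (w y *\<^sub>R y)))"
      by (rule integrable_bounded_linear[OF blz iwy])
    have "(u z - Dz z) * V + Dz IW
       = integral\<^sup>L lborel (\<lambda>y. (u z - Dz z) * (indicator S y *\<^sub>R w y) + Dz (indicator S y *\<^sub>R (w y *\<^sub>R y)))"
      apply (subst Bochner_Integration.integral_add[OF ig1 ig2])
      apply (subst integral_bounded_linear[OF blz iwy])
      using mass IW_def by simp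
    also have "\<dots> \<le> I" unfolding I_def
    proof (rule integral_mono[OF Bochner_Integration.integrable_add[OF ig1 ig2] iu])
      fix y
      show "(u z - Dz z) * (indicator S y *\<^sub>R w y) + Dz (indicator S y *\<^sub>R (w y *\<^sub>R y))
            \<le> indicator S y *\<^sub>R (u y * \<pi> y * (1 - \<theta> y))"
      proof (cases "y \<in> S")
        case True
        have yQ: "y \<in> Q" using True SQ by blast
        have tg: "u z + Dz (y - z) \<le> u y" by (rule sc_tangent[OF sc zQ' yQ Dz])
        have "(u z - Dz z) * (indicator S y *\<^sub>R w y) + Dz (indicator S y *\<^sub>R (w y *\<^sub>R y))
              = w y * (u z + Dz (y - z))"
          using True by (simp add: linear_scale[OF linz] linear_diff[OF linz] algebra_simps)
        also have "\<dots> \<le> w y * u y" using tg w0[OF True] by (rule mult_left_mono)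
        also have "\<dots> = indicator S y *\<^sub>R (u y * \<pi> y * (1 - \<theta> y))"
          using True by (simp add: w_def)
        finally show ?thesis .
      next
        case False then show ?thesis by (simp add: linear_0[OF linz])
      qed
    qed
    finally have T4: "(u z - Dz z) * V + Dz IW \<le> I" .
    have IWB: "IW = V *\<^sub>R B" using Vpos by (simp add: Bdef IW_def)
    define \<beta> where "\<beta> = Dz B"
    have DzIW: "Dz IW = V * \<beta>" by (simp add: IWB \<beta>_def linear_scale[OF linz])
    have Dzz: "Dz z = (1 - s) * \<beta>" by (simp add: z_def \<beta>_def linear_scale[OF linz])
    have Dz0: "Dz (0 - z) = - Dz z" by (simp add: linear_neg[OF linz])
    define Iv where "Iv = (1 / V) * I"
    have "V * (u z + s * \<beta>) \<le> I" using T4 DzIW Dzz by (simp add: algebra_simps)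
    hence h0: "u z + s * \<beta> \<le> Iv" using Vpos by (simp add: Iv_def field_simps)
    have h3: "u z \<le> (1 - s) * \<beta>" using T3 u0 Dz0 Dzz by simp
    have uqz: "u q \<le> u z" using T1 T2 zq by simp
    have h1: "(1 - s) * (u z + s * \<beta>) \<le> (1 - s) * Iv" using h0 s by (intro mult_left_mono) auto
    have h2: "s * u z \<le> s * ((1 - s) * \<beta>)" using h3 s by (intro mult_left_mono) auto
    have "(1 - s) * (u z + s * \<beta>) = (1 - s) * u z + s * ((1 - s) * \<beta>)" by (simp add: algebra_simps)
    hence key: "u z \<le> (1 - s) * Iv" using h1 h2 by (simp add: algebra_simps)
    have LXe: "LX R a c d \<xi> u = Iv - u q"
      by (simp add: LX_def Iv_def I_def V_def S_def \<pi>_def \<theta>_def q_def set_lebesgue_integral_def)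
    have Ie: "(LINT y : polyQ_plus R a c d | lborel. u y * piR R y * (1 - thetaX R a c d \<xi> y)) = I"
      by (simp add: I_def S_def \<pi>_def \<theta>_def set_lebesgue_integral_def)
    have "s / V * I = s * Iv" by (simp add: Iv_def)
    then show "s / V * (LINT y : polyQ_plus R a c d | lborel. u y * piR R y * (1 - thetaX R a c d \<xi> y))
          \<le> LX R a c d \<xi> u"
      using Ie LXe key uqz by (simp add: algebra_simps)
  qed
qed

end
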